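(* Let $g(t)$, $t\in[0,T)$, be the Ricci flow solution on $S^1\times S^3$ of the form $g(t)=\phi^2dz^2+a^2\omega^1\otimes\omega^1+b^2\omega^2\otimes\omega^2+c^2\omega^3\otimes\omega^3$ starting from initial data with $0<a\le b\le c$, and suppose the flow becomes singular at a finite time $T$ with $\check a(T)=0$, where $\check a(t)=\min_s a(s,t)$. Then $T\ge \frac{\check a(0)^2}{4}$.
   Context: $S^3=SU(2)$ carries a global left-invariant frame $E_1,E_2,E_3$ with $[E_i,E_j]=-2\epsilon_{ijk}E_k$ and dual coframe $\omega^i$; $z\in S^1=[0,2\pi)$, $\phi,a,b,c$ positive smooth $2\pi$-periodic functions; $s$ is the arclength coordinate $ds=\phi\,dz$. The Ricci flow $\partial_tg=-2\mathrm{Ric}(g)$ preserves this form. *)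

theory Defs
  imports "HOL-Analysis.Analysis"
begin

text \<open>Functions of (z,t), with z the S^1 coordinate (2pi-periodic in z) and t time.\<close>

text \<open>Smoothness (C-infinity) of a function of two real variables on a set S:
  f lies in a family of functions closed under taking the two partial derivatives,
  each member being (Frechet) differentiable at every point of S (within S).\<close>
definition smooth2_on :: "(real \<times> real) set \<Rightarrow> (real \<times> real \<Rightarrow> real) \<Rightarrow> bool" where
  "smooth2_on S f \<longleftrightarrow>
     (\<exists>F. f \<in> F \<and> (\<forall>g\<in>F. \<exists>gz gt. gz \<in> F \<and> gt \<in> F \<and>
        (\<forall>p\<in>S. (g has_derivative (\<lambda>(h,k). gz p * h + gt p * k)) (at p within S))))"

definition dz :: "(real \<times> real \<Rightarrow> real) \<Rightarrow> real \<times> real \<Rightarrow> real" where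
  "dz f p = deriv (\<lambda>y. f (y, snd p)) (fst p)"

definition dt :: "(real \<times> real \<Rightarrow> real) \<Rightarrow> real \<times> real \<Rightarrow> real" where
  "dt f p = deriv (\<lambda>s. f (fst p, s)) (snd p)"

text \<open>Derivative with respect to arclength s, ds = phi dz.\<close>
definition ds :: "(real \<times> real \<Rightarrow> real) \<Rightarrow> (real \<times> real \<Rightarrow> real) \<Rightarrow> real \<times> real \<Rightarrow> real" where
  "ds \<phi> f p = dz f p / \<phi> p"

text \<open>Ricci flow of g = phi^2 dz^2 + a^2 w1^2 + b^2 w2^2 + c^2 w3^2 on S^1 x S^3,
  with [E_i,E_j] = -2 eps_ijk E_k, written as the PDE system for phi,a,b,c
  (partial_t at fixed z; all z-derivatives expressed through s).\<close>
definition ricci_flow_S1S3 ::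
  "real \<Rightarrow> (real \<times> real \<Rightarrow> real) \<Rightarrow> (real \<times> real \<Rightarrow> real) \<Rightarrow> (real \<times> real \<Rightarrow> real)
     \<Rightarrow> (real \<times> real \<Rightarrow> real) \<Rightarrow> bool" where
  "ricci_flow_S1S3 T \<phi> a b c \<longleftrightarrow>
     0 < T \<and>
     (\<forall>f\<in>{\<phi>, a, b, c}.
        smooth2_on (UNIV \<times> {0..<T}) f \<and>
        (\<forall>z t. 0 \<le> t \<and> t < T \<longrightarrow> f (z + 2*pi, t) = f (z, t) \<and> 0 < f (z, t))) \<and>
     (\<forall>z t. 0 < t \<and> t < T \<longrightarrow>
        (let p = (z, t);
             A = a p; B = b p; C = c p;
             As = ds \<phi> a p; Bs = ds \<phi> b p; Cs = ds \<phi> c p;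
             Ass = ds \<phi> (ds \<phi> a) p; Bss = ds \<phi> (ds \<phi> b) p; Css = ds \<phi> (ds \<phi> c) p
         in dt a p = Ass + As * (Bs / B + Cs / C) - 2 * (A^4 - (B^2 - C^2)^2) / (A * B^2 * C^2)
          \<and> dt b p = Bss + Bs * (As / A + Cs / C) - 2 * (B^4 - (A^2 - C^2)^2) / (A^2 * B * C^2)
          \<and> dt c p = Css + Cs * (As / A + Bs / B) - 2 * (C^4 - (A^2 - B^2)^2) / (A^2 * B^2 * C)
          \<and> dt \<phi> p = \<phi> p * (Ass / A + Bss / B + Css / C)))"

definition amin :: "(real \<times> real \<Rightarrow> real) \<Rightarrow> real \<Rightarrow> real" where
  "amin a t = (INF z\<in>{0..2*pi}. a (z, t))"

end

theory Submission
  imports Defs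
begin

lemma smooth2_D:
  assumes "smooth2_on S f"
  shows "\<exists>gz gt. smooth2_on S gz \<and> smooth2_on S gt \<and>
     (\<forall>p\<in>S. (f has_derivative (\<lambda>(h,k). gz p * h + gt p * k)) (at p within S))"
proof -
  obtain F where F: "f \<in> F" "\<forall>g\<in>F. \<exists>gz gt. gz \<in> F \<and> gt \<in> F \<and>
        (\<forall>p\<in>S. (g has_derivative (\<lambda>(h,k). gz p * h + gt p * k)) (at p within S))"
    using assms unfolding smooth2_on_def by blast
  then obtain gz gt where g: "gz \<in> F" "gt \<in> F"
     "\<forall>p\<in>S. (f has_derivative (\<lambda>(h,k). gz p * h + gt p * k)) (at p within S)" by blast
  have "smooth2_on S gz" "smooth2_on S gt" unfolding smooth2_on_def using F g by blast+
  with g show ?thesis by blast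
qed

lemma smooth2_cont:
  assumes "smooth2_on S f" shows "continuous_on S f"
proof -
  obtain gz gt where "\<forall>p\<in>S. (f has_derivative (\<lambda>(h,k). gz p * h + gt p * k)) (at p within S)"
    using smooth2_D[OF assms] by blast
  then show ?thesis
    using continuous_on_eq_continuous_within has_derivative_continuous by blast
qed

lemma smooth2_D2:
  assumes "smooth2_on (UNIV \<times> {0..<T}) f"
  shows "\<exists>gz gt. smooth2_on (UNIV \<times> {0..<T}) gz \<and> smooth2_on (UNIV \<times> {0..<T}) gt \<and>
     (\<forall>z t. 0 < t \<and> t < T \<longrightarrow>
        ((\<lambda>y. f (y, t)) has_real_derivative gz (z,t)) (at z) \<and>
        ((\<lambda>s. f (z, s)) has_real_derivative gt (z,t)) (at t))"
proof -
  obtain gz gt where g: "smooth2_on (UNIV \<times> {0..<T}) gz" "smooth2_on (UNIV \<times> {0..<T}) gt"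
     "\<forall>p\<in>UNIV \<times> {0..<T}. (f has_derivative (\<lambda>(h,k). gz p * h + gt p * k)) (at p within UNIV \<times> {0..<T})"
    using smooth2_D[OF assms] by blast
  have "((\<lambda>y. f (y, t)) has_real_derivative gz (z,t)) (at z) \<and>
        ((\<lambda>s. f (z, s)) has_real_derivative gt (z,t)) (at t)" if "0 < t" "t < T" for z t
  proof -
    have op: "open (UNIV \<times> {0<..<T::real})" by (simp add: open_Times)
    have "(f has_derivative (\<lambda>(h,k). gz (z,t) * h + gt (z,t) * k)) (at (z,t) within UNIV \<times> {0..<T})"
      using g(3) that by auto
    then have "(f has_derivative (\<lambda>(h,k). gz (z,t) * h + gt (z,t) * k)) (at (z,t) within UNIV \<times> {0<..<T})"
      by (rule has_derivative_subset) auto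
    then have D: "(f has_derivative (\<lambda>(h,k). gz (z,t) * h + gt (z,t) * k)) (at (z,t))"
      using at_within_open[OF _ op, of "(z,t)"] that by simp
    have e1: "((\<lambda>y. (y, t)) has_derivative (\<lambda>h. (h, 0))) (at z)"
      by (auto intro!: derivative_eq_intros)
    have e2: "((\<lambda>s. (z, s)) has_derivative (\<lambda>h. (0, h))) (at t)"
      by (auto intro!: derivative_eq_intros)
    have c1: "(f \<circ> (\<lambda>y. (y, t)) has_derivative (\<lambda>(h,k). gz (z,t) * h + gt (z,t) * k) \<circ> (\<lambda>h. (h, 0))) (at z)"
      using diff_chain_at[OF e1] D by auto
    have c2: "(f \<circ> (\<lambda>s. (z, s)) has_derivative (\<lambda>(h,k). gz (z,t) * h + gt (z,t) * k) \<circ> (\<lambda>h. (0, h))) (at t)"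
      using diff_chain_at[OF e2] D by auto
    have "(\<lambda>(h,k). gz (z,t) * h + gt (z,t) * k) \<circ> (\<lambda>h. (h, 0)) = (*) (gz (z,t))" by auto
    moreover have "(\<lambda>(h,k). gz (z,t) * h + gt (z,t) * k) \<circ> (\<lambda>h. (0, h)) = (*) (gt (z,t))" by auto
    ultimately show ?thesis using c1 c2 unfolding has_field_derivative_def by (simp add: comp_def)
  qed
  with g show ?thesis by blast
qed

lemma second_deriv_min:
  fixes \<psi> \<psi>' :: "real \<Rightarrow> real"
  assumes D: "\<forall>y. (\<psi> has_real_derivative \<psi>' y) (at y)"
    and D2: "(\<psi>' has_real_derivative d) (at x)"
    and mn: "\<forall>y. \<psi> x \<le> \<psi> y"
  shows "0 \<le> d"
proof (rule ccontr)
  assume "\<not> 0 \<le> d"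
  then have dn: "d < 0" by simp
  have z: "\<psi>' x = 0" using DERIV_local_min[of \<psi> "\<psi>' x" x 1] D mn by auto
  obtain \<delta> where dp: "\<delta> > 0" and dec: "\<forall>h>0. h < \<delta> \<longrightarrow> \<psi>' (x + h) < \<psi>' x"
    using DERIV_neg_dec_right[OF D2 dn] by blast
  have "x < x + \<delta>/2" using dp by simp
  from MVT2[OF this, of \<psi> \<psi>'] D obtain \<xi> where xi: "\<xi> > x" "\<xi> < x + \<delta>/2"
    "\<psi> (x + \<delta>/2) - \<psi> x = (x + \<delta>/2 - x) * \<psi>' \<xi>" by blast
  have "\<psi>' (x + (\<xi> - x)) < \<psi>' x" using dec[rule_format, of "\<xi> - x"] xi dp by auto
  then have "\<psi>' \<xi> < 0" using z by simp
  then have "(x + \<delta>/2 - x) * \<psi>' \<xi> < 0" using dp by (simp add: mult_pos_neg)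
  then show False using xi(3) mn[rule_format, of "x + \<delta>/2"] by simp
qed

lemma per_nat:
  assumes "\<forall>z. g (z + 2*pi) = (g z :: real)"
  shows "g (z + 2*pi*real n) = g z"
proof (induction n)
  case 0 then show ?case by simp
next
  case (Suc n)
  have "g (z + 2*pi*real (Suc n)) = g ((z + 2*pi*real n) + 2*pi)" by (simp add: algebra_simps)
  also have "\<dots> = g (z + 2*pi*real n)" using assms by blast
  finally show ?case using Suc by simp
qed

lemma per_red:
  assumes "\<forall>z. g (z + 2*pi) = (g z :: real)"
  shows "\<exists>w\<in>{0..2*pi}. g w = g z"
proof -
  define k where "k = floor (z / (2*pi))"
  define w where "w = z - 2*pi * of_int k"
  have k1: "of_int k \<le> z / (2*pi)" and k2: "z / (2*pi) < of_int k + 1"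
    unfolding k_def by linarith+
  have "2*pi * of_int k \<le> z" using k1 pi_gt_zero by (simp add: field_simps)
  moreover have "z < 2*pi*(of_int k + 1)" using k2 pi_gt_zero by (simp add: field_simps)
  ultimately have w: "w \<in> {0..2*pi}" unfolding w_def by (auto simp: algebra_simps)
  have "g w = g z"
  proof (cases "k \<ge> 0")
    case True
    then obtain n where "k = int n" using nonneg_eq_int by blast
    then have "z = w + 2*pi*real n" unfolding w_def by simp
    then show ?thesis using per_nat[OF assms, of w n] by simp
  next
    case False
    define n where "n = nat (- k)"
    have "k = - int n" unfolding n_def using False by simp
    then have "w = z + 2*pi*real n" unfolding w_def by simp
    then show ?thesis using per_nat[OF assms, of z n] by simp
  qed
  with w show ?thesis by blast
qed


lemma react:
  fixes x y w r :: real
  assumes x0: "0 < x" and xy: "x \<le> y" and xw: "x \<le> w" and r0: "0 \<le> r"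
  shows "-2/x \<le> -2*(x^4 - r)/(x*y^2*w^2)"
proof -
  have y: "0 < y" and w: "0 < w" using x0 xy xw by linarith+
  have Dp: "0 < x*y^2*w^2" using x0 y w by simp
  have a1: "x^2 \<le> y^2" using x0 xy by (intro power_mono) auto
  have a2: "x^2 \<le> w^2" using x0 xw by (intro power_mono) auto
  have a3: "x^2*x^2 \<le> y^2*w^2" using a1 a2 by (intro mult_mono) auto
  have a4: "x^4 = x^2*x^2" by (simp add: power4_eq_xxxx power2_eq_square)
  have x4: "x^4 \<le> y^2*w^2" unfolding a4 by (rule a3)
  have b1: "-2*x^4/(x*y^2*w^2) \<le> -2*(x^4 - r)/(x*y^2*w^2)"
    using Dp r0 by (intro divide_right_mono) auto
  have e: "(2/x)*(x*y^2*w^2) = 2*(y^2*w^2)" using x0 by simp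
  have "2*x^4 \<le> (2/x)*(x*y^2*w^2)" unfolding e using x4 by simp
  then have "2*x^4/(x*y^2*w^2) \<le> 2/x" using Dp by (simp add: pos_divide_le_eq)
  then have b2: "-2/x \<le> -2*x^4/(x*y^2*w^2)" by simp
  from b1 b2 show ?thesis by linarith
qed


lemma min_contra:
  fixes f \<phi> :: "real \<times> real \<Rightarrow> real" and e t1 z1 X T :: real
  assumes sf: "smooth2_on (UNIV \<times> {0..<T}) f" and sp: "smooth2_on (UNIV \<times> {0..<T}) \<phi>"
    and t1: "0 < t1" "t1 < T"
    and ppos: "\<forall>z. 0 < \<phi> (z, t1)" and fpos: "0 < f (z1, t1)"
    and smin: "\<forall>z. f (z1, t1) \<le> f (z, t1)"
    and tmin: "\<forall>t. 0 \<le> t \<and> t < t1 \<longrightarrow> f (z1, t1)^2 + (4+e)*t1 < f (z1, t)^2 + (4+e)*t"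
    and e: "0 < e"
    and pde: "ds \<phi> (ds \<phi> f) (z1, t1) + ds \<phi> f (z1, t1) * X - 2 / f (z1, t1) \<le> dt f (z1, t1)"
  shows False
proof -
  obtain fz ft where sfz: "smooth2_on (UNIV \<times> {0..<T}) fz" and Df: "\<forall>z t. 0 < t \<and> t < T \<longrightarrow> ((\<lambda>y. f (y, t)) has_real_derivative fz (z,t)) (at z) \<and> ((\<lambda>s. f (z, s)) has_real_derivative ft (z,t)) (at t)"
    using smooth2_D2[OF sf] by blast
  obtain fzz fzt where Dfz: "\<forall>z t. 0 < t \<and> t < T \<longrightarrow> ((\<lambda>y. fz (y, t)) has_real_derivative fzz (z,t)) (at z) \<and> ((\<lambda>s. fz (z, s)) has_real_derivative fzt (z,t)) (at t)"
    using smooth2_D2[OF sfz] by blast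
  obtain pz pt where Dp: "\<forall>z t. 0 < t \<and> t < T \<longrightarrow> ((\<lambda>y. \<phi> (y, t)) has_real_derivative pz (z,t)) (at z) \<and> ((\<lambda>s. \<phi> (z, s)) has_real_derivative pt (z,t)) (at t)"
    using smooth2_D2[OF sp] by blast
  have Dz: "\<forall>y. ((\<lambda>y. f (y, t1)) has_real_derivative fz (y,t1)) (at y)" using Df t1 by blast
  have Dzz: "((\<lambda>y. fz (y, t1)) has_real_derivative fzz (z1,t1)) (at z1)" using Dfz t1 by blast
  have Dpz: "((\<lambda>y. \<phi> (y, t1)) has_real_derivative pz (z1,t1)) (at z1)" using Dp t1 by blast
  have Dt: "((\<lambda>s. f (z1, s)) has_real_derivative ft (z1,t1)) (at t1)" using Df t1 by blast
  have fzz0: "0 \<le> fzz (z1,t1)"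
    using second_deriv_min[of "\<lambda>y. f (y, t1)" "\<lambda>y. fz (y,t1)" "fzz (z1,t1)" z1] Dz Dzz smin by blast
  have fz0: "fz (z1,t1) = 0" using DERIV_local_min[of "\<lambda>y. f (y, t1)" "fz (z1,t1)" z1 1] Dz smin by auto
  have dzf: "dz f (y,t1) = fz (y,t1)" for y unfolding dz_def using Dz DERIV_imp_deriv by fastforce
  have dsf: "(\<lambda>y. ds \<phi> f (y,t1)) = (\<lambda>y. fz (y,t1) / \<phi> (y,t1))" unfolding ds_def using dzf by auto
  have pn: "\<phi> (z1,t1) \<noteq> 0" using ppos by (metis less_irrefl)
  have Dq: "((\<lambda>y. fz (y,t1) / \<phi> (y,t1)) has_real_derivative (fzz (z1,t1) * \<phi> (z1,t1) - fz (z1,t1) * pz (z1,t1)) / (\<phi> (z1,t1) * \<phi> (z1,t1))) (at z1)"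
    using DERIV_divide[OF Dzz Dpz pn] by simp
  have "dz (ds \<phi> f) (z1,t1) = fzz (z1,t1) * \<phi> (z1,t1) / (\<phi> (z1,t1) * \<phi> (z1,t1))"
    unfolding dz_def using DERIV_imp_deriv[OF Dq] dsf fz0 by simp
  then have "ds \<phi> (ds \<phi> f) (z1,t1) = fzz (z1,t1) * \<phi> (z1,t1) / (\<phi> (z1,t1) * \<phi> (z1,t1)) / \<phi> (z1,t1)"
    unfolding ds_def[of \<phi> "ds \<phi> f"] by simp
  then have dss: "0 \<le> ds \<phi> (ds \<phi> f) (z1,t1)"
    using fzz0 ppos[rule_format, of z1] by simp
  have ds0: "ds \<phi> f (z1,t1) = 0" unfolding ds_def using dzf fz0 by simp
  have dtf: "dt f (z1,t1) = ft (z1,t1)" unfolding dt_def using DERIV_imp_deriv[OF Dt] by simp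
  from pde dss ds0 dtf have low: "- 2 / f (z1,t1) \<le> ft (z1,t1)" by simp
  then have "(-2) / f (z1,t1) \<le> ft (z1,t1)" by simp
  then have low2: "-2 \<le> ft (z1,t1) * f (z1,t1)" using fpos pos_divide_le_eq by blast
  have Dg: "((\<lambda>s. f (z1,s)^2 + (4 + e) * s) has_real_derivative (2 * f (z1,t1) * ft (z1,t1) + (4+e))) (at t1)"
    using Dt by (auto intro!: derivative_eq_intros)
  have "2 * f (z1,t1) * ft (z1,t1) + (4+e) \<le> 0"
  proof (rule ccontr)
    assume "\<not> ?thesis"
    then obtain d where d: "d > 0" "\<forall>h>0. h < d \<longrightarrow> f (z1, t1 - h)^2 + (4+e)*(t1-h) < f (z1,t1)^2 + (4+e)*t1"
      using DERIV_pos_inc_left[OF Dg] by force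
    define h where "h = min (d/2) (t1/2)"
    have hh: "h > 0" "h < d" "h \<le> t1/2" using d t1 unfolding h_def by auto
    then have "f (z1, t1 - h)^2 + (4+e)*(t1-h) < f (z1,t1)^2 + (4+e)*t1" using d by blast
    moreover have "f (z1,t1)^2 + (4+e)*t1 < f (z1, t1-h)^2 + (4+e)*(t1-h)"
      using tmin hh t1 by auto
    ultimately show False by linarith
  qed
  then show False using low2 e by (simp add: mult.commute)
qed


theorem corollary4p2:
  fixes T :: real and \<phi> a b c :: "real \<times> real \<Rightarrow> real"
  assumes flow: "ricci_flow_S1S3 T \<phi> a b c"
    and init: "\<And>z. a (z, 0) \<le> b (z, 0) \<and> b (z, 0) \<le> c (z, 0)"
    and sing: "((\<lambda>t. amin a t) \<longlongrightarrow> 0) (at_left T)"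
  shows "T \<ge> (amin a 0)^2 / 4"
proof -
  have T0: "0 < T" using flow unfolding ricci_flow_S1S3_def by blast
  have sm: "smooth2_on (UNIV \<times> {0..<T}) f" and pp: "\<forall>z t. 0 \<le> t \<and> t < T \<longrightarrow> f (z + 2*pi, t) = f (z, t) \<and> 0 < f (z, t)"
    if "f \<in> {\<phi>, a, b, c}" for f
    using flow that unfolding ricci_flow_S1S3_def by blast+
  have PDE: "\<forall>z t. 0 < t \<and> t < T \<longrightarrow>
        (let p = (z, t);
             A = a p; B = b p; C = c p;
             As = ds \<phi> a p; Bs = ds \<phi> b p; Cs = ds \<phi> c p;
             Ass = ds \<phi> (ds \<phi> a) p; Bss = ds \<phi> (ds \<phi> b) p; Css = ds \<phi> (ds \<phi> c) p
         in dt a p = Ass + As * (Bs / B + Cs / C) - 2 * (A^4 - (B^2 - C^2)^2) / (A * B^2 * C^2)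
          \<and> dt b p = Bss + Bs * (As / A + Cs / C) - 2 * (B^4 - (A^2 - C^2)^2) / (A^2 * B * C^2)
          \<and> dt c p = Css + Cs * (As / A + Bs / B) - 2 * (C^4 - (A^2 - B^2)^2) / (A^2 * B^2 * C)
          \<and> dt \<phi> p = \<phi> p * (Ass / A + Bss / B + Css / C))"
    using flow unfolding ricci_flow_S1S3_def by blast
  define S where "S = (UNIV::real set) \<times> {0..<T::real}"
  define m0 where "m0 = amin a 0"
  define K where "K = m0^2"
  define u where "u p = min (a p) (min (b p) (c p))" for p
  have apos: "0 < a (z,t)" "0 < b (z,t)" "0 < c (z,t)" "0 < \<phi> (z,t)" if "0 \<le> t" "t < T" for z t
    using pp[of a] pp[of b] pp[of c] pp[of \<phi>] that by auto
  have upos: "0 < u (z,t)" if "0 \<le> t" "t < T" for z t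
    using apos[OF that] unfolding u_def by simp
  have uper: "\<forall>z. u (z + 2*pi, t) = u (z,t)" if "0 \<le> t" "t < T" for t
    using pp[of a] pp[of b] pp[of c] that unfolding u_def by simp
  have ucont: "continuous_on S u"
    unfolding u_def[abs_def] S_def
    by (intro continuous_on_min smooth2_cont sm) auto
  have bdd: "bdd_below ((\<lambda>z. a (z,t)) ` {0..2*pi})" if "0 \<le> t" "t < T" for t
    using apos[OF that] by (intro bdd_belowI[of _ 0]) (auto intro: less_imp_le)
  have amin_nn: "0 \<le> amin a t" if "0 \<le> t" "t < T" for t
    unfolding amin_def using apos[OF that] by (intro cINF_greatest) (auto intro: less_imp_le)
  have m0a: "m0 \<le> a (z,0)" if "z \<in> {0..2*pi}" for z
    unfolding m0_def amin_def using bdd[of 0] T0 that by (intro cINF_lower) auto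
  have m0nn: "0 \<le> m0" unfolding m0_def using amin_nn[of 0] T0 by simp
  have u0: "m0 \<le> u (z,0)" for z
  proof -
    have "\<exists>w\<in>{0..2*pi}. u (w,0) = u (z,0)" using per_red[OF uper[of 0]] T0 by blast
    then obtain w where w: "w \<in> {0..2*pi}" "u (w,0) = u (z,0)" by blast
    have "u (w,0) = a (w,0)" unfolding u_def using init[of w] by simp
    then show ?thesis using w m0a[OF w(1)] by simp
  qed
  have barrier: "K - (4+e)*t - e < u (z,t)^2" if e: "0 < e" and t: "0 \<le> t" "t < T" for e t z
  proof (rule ccontr)
    define h where "h s = K - (4+e)* s - e" for s
    assume "\<not> ?thesis"
    then have t2f: "u (z,t)^2 \<le> h t" unfolding h_def by simp
    have "\<exists>w\<in>{0..2*pi}. u (w,t) = u (z,t)" using per_red[OF uper[OF t]] by blast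
    then obtain z3 where z3: "z3 \<in> {0..2*pi}" "u (z3,t) = u (z,t)" by blast
    define Bx where "Bx = {0..2*pi} \<times> {0..t}"
    define F where "F = Bx \<inter> (\<lambda>p. u p^2 - h (snd p)) -` {..0}"
    have BxS: "Bx \<subseteq> S" unfolding Bx_def S_def using t by auto
    have cB: "continuous_on Bx (\<lambda>p. u p^2 - h (snd p))"
      unfolding h_def using continuous_on_subset[OF ucont BxS]
      by (intro continuous_intros) auto
    have clF: "closed F" unfolding F_def
      by (rule continuous_closed_preimage[OF cB]) (auto simp: Bx_def intro: closed_Times)
    have cpB: "compact Bx" unfolding Bx_def by (intro compact_Times) auto
    have "compact (Bx \<inter> F)" using compact_Int_closed[OF cpB clF] .
    moreover have "Bx \<inter> F = F" unfolding F_def by auto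
    ultimately have cpF: "compact F" by simp
    have z3F: "(z3,t) \<in> F" unfolding F_def Bx_def using z3 t t2f by auto
    obtain p1 where p1: "p1 \<in> F" "\<forall>q\<in>F. snd p1 \<le> snd q"
      using continuous_attains_inf[OF cpF _ continuous_on_snd[OF continuous_on_id]] z3F by blast
    obtain z1 t1 where p1e: "p1 = (z1,t1)" by (cases p1)
    have z1r: "z1 \<in> {0..2*pi}" and t1r: "0 \<le> t1" "t1 \<le> t" and ut1: "u (z1,t1)^2 \<le> h t1"
      using p1(1) unfolding p1e F_def Bx_def by auto
    have t1T: "t1 < T" using t1r t by simp
    have t1p: "0 < t1"
    proof (rule ccontr)
      assume "\<not> 0 < t1"
      then have "t1 = 0" using t1r by simp
      then have "m0^2 \<le> u (z1,t1)^2" using u0[of z1] m0nn by (simp add: power_mono)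
      then show False using ut1 e unfolding h_def K_def \<open>t1 = 0\<close> by simp
    qed
    have before: "h s < u (y,s)^2" if "0 \<le> s" "s < t1" for y s
    proof -
      have sT: "s < T" using that t1T by simp
      have "\<exists>w\<in>{0..2*pi}. u (w,s) = u (y,s)" using per_red[OF uper[OF that(1) sT]] by blast
      then obtain w where w: "w \<in> {0..2*pi}" "u (w,s) = u (y,s)" by blast
      have "(w,s) \<notin> F" using p1(2) that unfolding p1e by force
      then have "\<not> u (w,s)^2 \<le> h s" unfolding F_def Bx_def using w that t1r by auto
      then show ?thesis using w by simp
    qed
    have atT: "h t1 \<le> u (y,t1)^2" for y
    proof -
      have op: "open ((UNIV::real set) \<times> {0<..<T})" by (simp add: open_Times)
      have "continuous_on ((UNIV::real set) \<times> {0<..<T}) u"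
        by (rule continuous_on_subset[OF ucont]) (auto simp: S_def)
      then have ic: "isCont u (y,t1)" using continuous_on_eq_continuous_at[OF op, of u] t1p t1T by auto
      have "isCont (\<lambda>s. u (y,s)) t1"
        using isCont_o2[where f="\<lambda>s. (y,s)" and a=t1 and g=u] ic by (auto intro: continuous_intros)
      then have "isCont (\<lambda>s. u (y,s)^2 - h s) t1" unfolding h_def by (intro continuous_intros)
      then have "((\<lambda>s. u (y,s)^2 - h s) \<longlongrightarrow> u (y,t1)^2 - h t1) (at_left t1)"
        using continuous_at_imp_continuous_at_within continuous_within by blast
      moreover have "\<forall>\<^sub>F s in at_left t1. 0 \<le> u (y,s)^2 - h s"
        using eventually_at_left_real[OF t1p] by eventually_elim (use before in \<open>auto intro: less_imp_le\<close>)
      ultimately have "0 \<le> u (y,t1)^2 - h t1"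
        by (rule tendsto_lowerbound) (simp add: trivial_limit_at_left_real)
      then show ?thesis by simp
    qed
    have ueq: "u (z1,t1)^2 = h t1" using atT[of z1] ut1 by simp
    have umin: "u (z1,t1) \<le> u (y,t1)" for y
    proof -
      have "u (z1,t1)^2 \<le> u (y,t1)^2" using atT[of y] ueq by linarith
      moreover have "0 \<le> u (y,t1)" using upos[OF t1r(1) t1T, of y] by linarith
      ultimately show ?thesis by (rule power2_le_imp_le)
    qed
    have key: False if fab: "f \<in> {a,b,c}" and fu: "f (z1,t1) = u (z1,t1)"
      and pde: "ds \<phi> (ds \<phi> f) (z1, t1) + ds \<phi> f (z1, t1) * X - 2 / f (z1, t1) \<le> dt f (z1, t1)" for f X
    proof (rule min_contra[of T f \<phi> t1 z1 e X])
      show "smooth2_on (UNIV \<times> {0..<T}) f" using sm fab by blast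
      show "smooth2_on (UNIV \<times> {0..<T}) \<phi>" using sm by blast
      show "0 < t1" "t1 < T" by fact+
      show "\<forall>z. 0 < \<phi> (z, t1)" using apos t1r t1T by auto
      show "0 < f (z1, t1)" using fu upos t1r t1T by auto
      have uf: "u q \<le> f q" for q using fab unfolding u_def by auto
      show "\<forall>z. f (z1, t1) \<le> f (z, t1)" using fu umin uf order_trans by metis
      show "0 < e" by fact
      show "ds \<phi> (ds \<phi> f) (z1, t1) + ds \<phi> f (z1, t1) * X - 2 / f (z1, t1) \<le> dt f (z1, t1)" by fact
      show "\<forall>s. 0 \<le> s \<and> s < t1 \<longrightarrow> f (z1, t1)^2 + (4+e) * t1 < f (z1, s)^2 + (4+e)* s"
      proof (intro allI impI)
        fix s assume s: "0 \<le> s \<and> s < t1"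
        have "u (z1,s)^2 \<le> f (z1,s)^2" using uf upos[of s z1] s t1T by (intro power_mono) (auto intro: less_imp_le)
        then show "f (z1, t1)^2 + (4+e) * t1 < f (z1, s)^2 + (4+e)* s"
          using before[of s z1] s fu ueq unfolding h_def by simp
      qed
    qed
    let ?p = "(z1,t1)"
    have P: "let p = (z1, t1);
             A = a p; B = b p; C = c p;
             As = ds \<phi> a p; Bs = ds \<phi> b p; Cs = ds \<phi> c p;
             Ass = ds \<phi> (ds \<phi> a) p; Bss = ds \<phi> (ds \<phi> b) p; Css = ds \<phi> (ds \<phi> c) p
         in dt a p = Ass + As * (Bs / B + Cs / C) - 2 * (A^4 - (B^2 - C^2)^2) / (A * B^2 * C^2)
          \<and> dt b p = Bss + Bs * (As / A + Cs / C) - 2 * (B^4 - (A^2 - C^2)^2) / (A^2 * B * C^2)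
          \<and> dt c p = Css + Cs * (As / A + Bs / B) - 2 * (C^4 - (A^2 - B^2)^2) / (A^2 * B^2 * C)
          \<and> dt \<phi> p = \<phi> p * (Ass / A + Bss / B + Css / C)"
      using PDE t1p t1T by blast
    have Pa: "dt a ?p = ds \<phi> (ds \<phi> a) ?p + ds \<phi> a ?p * (ds \<phi> b ?p / b ?p + ds \<phi> c ?p / c ?p)
       - 2 * (a ?p^4 - (b ?p^2 - c ?p^2)^2) / (a ?p * b ?p^2 * c ?p^2)"
      and Pb: "dt b ?p = ds \<phi> (ds \<phi> b) ?p + ds \<phi> b ?p * (ds \<phi> a ?p / a ?p + ds \<phi> c ?p / c ?p)
       - 2 * (b ?p^4 - (a ?p^2 - c ?p^2)^2) / (a ?p^2 * b ?p * c ?p^2)"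
      and Pc: "dt c ?p = ds \<phi> (ds \<phi> c) ?p + ds \<phi> c ?p * (ds \<phi> a ?p / a ?p + ds \<phi> b ?p / b ?p)
       - 2 * (c ?p^4 - (a ?p^2 - b ?p^2)^2) / (a ?p^2 * b ?p^2 * c ?p)"
      using P unfolding Let_def by blast+
    have pa: "0 < a ?p" "0 < b ?p" "0 < c ?p" using apos t1r t1T by auto
    consider "u ?p = a ?p" "a ?p \<le> b ?p" "a ?p \<le> c ?p"
      | "u ?p = b ?p" "b ?p \<le> a ?p" "b ?p \<le> c ?p"
      | "u ?p = c ?p" "c ?p \<le> a ?p" "c ?p \<le> b ?p"
      unfolding u_def by linarith
    then show False
    proof cases
      case 1
      have r: "-2 / a ?p \<le> - 2 * (a ?p^4 - (b ?p^2 - c ?p^2)^2) / (a ?p * b ?p^2 * c ?p^2)"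
        using react[OF pa(1) 1(2) 1(3) zero_le_power2] .
      have "ds \<phi> (ds \<phi> a) ?p + ds \<phi> a ?p * (ds \<phi> b ?p / b ?p + ds \<phi> c ?p / c ?p) - 2 / a ?p \<le> dt a ?p"
        using Pa r by linarith
      then show False using key[of a] 1(1) by auto
    next
      case 2
      have e2: "a ?p^2 * b ?p * c ?p^2 = b ?p * a ?p^2 * c ?p^2" by (simp only: mult_ac)
      have r: "-2 / b ?p \<le> - 2 * (b ?p^4 - (a ?p^2 - c ?p^2)^2) / (a ?p^2 * b ?p * c ?p^2)"
        unfolding e2 using react[OF pa(2) 2(2) 2(3) zero_le_power2] .
      have "ds \<phi> (ds \<phi> b) ?p + ds \<phi> b ?p * (ds \<phi> a ?p / a ?p + ds \<phi> c ?p / c ?p) - 2 / b ?p \<le> dt b ?p"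
        using Pb r by linarith
      then show False using key[of b] 2(1) by auto
    next
      case 3
      have e3: "a ?p^2 * b ?p^2 * c ?p = c ?p * a ?p^2 * b ?p^2" by (simp only: mult_ac)
      have r: "-2 / c ?p \<le> - 2 * (c ?p^4 - (a ?p^2 - b ?p^2)^2) / (a ?p^2 * b ?p^2 * c ?p)"
        unfolding e3 using react[OF pa(3) 3(2) 3(3) zero_le_power2] .
      have "ds \<phi> (ds \<phi> c) ?p + ds \<phi> c ?p * (ds \<phi> a ?p / a ?p + ds \<phi> b ?p / b ?p) - 2 / c ?p \<le> dt c ?p"
        using Pc r by linarith
      then show False using key[of c] 3(1) by auto
    qed
  qed
  have bound: "K - (4+e)*t - e \<le> (amin a t)^2" if tt: "0 < e" "0 \<le> t" "t < T" for e t
  proof (cases "K - (4+e)*t - e \<le> 0")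
    case True
    have "0 \<le> (amin a t)^2" by simp
    then show ?thesis using True by linarith
  next
    case False
    let ?h = "K - (4+e)*t - e"
    have "sqrt ?h \<le> amin a t" unfolding amin_def
    proof (rule cINF_greatest)
      show "{0..2*pi} \<noteq> {}" by simp
      fix z assume "z \<in> {0..2*pi}"
      have h1: "?h < u (z,t)^2" by (rule barrier[OF tt])
      have h2: "u (z,t) \<le> a (z,t)" unfolding u_def by simp
      have h3: "0 < u (z,t)" by (rule upos[OF tt(2,3)])
      have "u (z,t)^2 \<le> a (z,t)^2" using h2 h3 by (intro power_mono) auto
      then have "?h < a (z,t)^2" using h1 by linarith
      then have "sqrt ?h < sqrt (a (z,t)^2)" by (rule real_sqrt_less_mono)
      then show "sqrt ?h \<le> a (z,t)" using apos(1)[OF tt(2,3), of z] by simp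
    qed
    then have "(sqrt ?h)^2 \<le> (amin a t)^2" using False by (intro power_mono) auto
    moreover have "(sqrt ?h)^2 = ?h" using False by (intro real_sqrt_pow2) linarith
    ultimately show ?thesis by linarith
  qed
  have lim: "K - (4+e)*T - e \<le> 0" if e0: "0 < e" for e
  proof -
    have "((\<lambda>t. (amin a t)^2 - (K - (4+e)*t - e)) \<longlongrightarrow> 0^2 - (K - (4+e)*T - e)) (at_left T)"
      by (intro tendsto_intros sing)
    moreover have "\<forall>\<^sub>F t in at_left T. 0 \<le> (amin a t)^2 - (K - (4+e)*t - e)"
      using eventually_at_left_real[OF T0] by eventually_elim (use bound e0 in auto)
    ultimately have "0 \<le> 0^2 - (K - (4+e)*T - e)"
      by (rule tendsto_lowerbound) (simp add: trivial_limit_at_left_real)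
    then show ?thesis by simp
  qed
  have "K \<le> 4*T"
  proof (rule ccontr)
    assume n: "\<not> K \<le> 4*T"
    define e where "e = (K - 4*T)/(2*(T+1))"
    have e0: "0 < e" using n T0 unfolding e_def by (intro divide_pos_pos) auto
    have "e*(T+1) = (K-4*T)/2" unfolding e_def using T0 by (simp add: field_simps)
    then have "K - (4+e)*T - e = (K-4*T)/2" by (simp add: algebra_simps)
    moreover have "0 < (K - 4*T)/2" using n by simp
    ultimately show False using lim[OF e0] by linarith
  qed
  then show ?thesis unfolding K_def m0_def by simp
qed

end
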